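(* Let $K=2^m$ with $m\ge2$ and $L\ge2$, and let $a(t)\in\mathbb{R}^{K-1}$ evolve according to $$\frac{da_i}{dt}=\frac{1}{D}b_ia_i^{\frac{2L}{L+1}},\qquad b_i=\sum_{j=1}^{K-1}\Psi_{ij}e^{-(\Psi a)_j},\quad D=1+\sum_{j=1}^{K-1}e^{-(\Psi a)_j}.$$ Suppose $a(0)$ has $a_i(0)=\gamma_0$ for odd $i$ and $a_i(0)=\delta_0$ for even $i$, with $\gamma_0,\delta_0>0$ and $\frac{\gamma_0}{\delta_0}>\big(\frac{K}{K-2}\big)^{\frac{L+1}{L-1}}$. Then for all $t\ge0$, $a(t)$ keeps this form ($a_i(t)=\gamma(t)$ for odd $i$, $a_i(t)=\delta(t)$ for even $i$), and the ratio $\gamma(t)/\delta(t)$ is strictly increasing in $t$; in particular $\gamma(t)/\delta(t)$ stays above $\big(\frac{K}{K-2}\big)^{\frac{L+1}{L-1}}$ for all $t\ge0$.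
   Context: Sylvester Hadamard matrices: $\Phi_1=(1)$, $\Phi_{2^m}=\begin{bmatrix}\Phi_{2^{m-1}}&\Phi_{2^{m-1}}\\ \Phi_{2^{m-1}}&-\Phi_{2^{m-1}}\end{bmatrix}$, $\Phi=\Phi_K$. $\Psi\in\mathbb{R}^{(K-1)\times(K-1)}$ is obtained from $1_K1_K^T-\Phi$ by deleting its first row and first column, indexed $1,\dots,K-1$. *)

theory Defs
  imports "HOL-Analysis.Analysis"
begin

(* Sylvester Hadamard matrix Phi_{2^m}, with 0-based indices i,j < 2^m:
   Phi_1 = (1),  Phi_{2^(m+1)} = [[Phi, Phi],[Phi, -Phi]] (blocks of size 2^m). *)
fun sylvester :: "nat \<Rightarrow> nat \<Rightarrow> nat \<Rightarrow> real" where
  "sylvester 0 i j = 1"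
| "sylvester (Suc m) i j =
     (if 2^m \<le> i \<and> 2^m \<le> j then -1 else 1) * sylvester m (i mod 2^m) (j mod 2^m)"

(* Psi = (1 1^T - Phi) with first row and column deleted; Psi is indexed by
   i,j in {1..K-1}, and Psi_{ij} = 1 - Phi(i,j) where Phi uses 0-based indices. *)
definition Psi :: "nat \<Rightarrow> nat \<Rightarrow> nat \<Rightarrow> real" where
  "Psi m i j = 1 - sylvester m i j"

definition Psi_mul :: "nat \<Rightarrow> (nat \<Rightarrow> real) \<Rightarrow> nat \<Rightarrow> real" where
  "Psi_mul m a j = (\<Sum>k=1..2^m - 1. Psi m j k * a k)"

definition b_coef :: "nat \<Rightarrow> (nat \<Rightarrow> real) \<Rightarrow> nat \<Rightarrow> real" where
  "b_coef m a i = (\<Sum>j=1..2^m - 1. Psi m i j * exp (- Psi_mul m a j))"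

definition D_coef :: "nat \<Rightarrow> (nat \<Rightarrow> real) \<Rightarrow> real" where
  "D_coef m a = 1 + (\<Sum>j=1..2^m - 1. exp (- Psi_mul m a j))"

end

theory Submission
  imports Defs
begin

lemma syl_zero_right: "sylvester m i 0 = 1"
  by (induction m arbitrary: i) auto

lemma syl_pm: "sylvester m i j = 1 \<or> sylvester m i j = -1"
  by (induction m arbitrary: i j) auto

lemma syl_low:
  "i < 2^Suc m \<Longrightarrow> j < 2^Suc m \<Longrightarrow>
   sylvester (Suc m) i j = (if odd i \<and> odd j then -1 else 1) * sylvester m (i div 2) (j div 2)"
proof (induction m arbitrary: i j)
  case 0
  then show ?case by (auto simp: less_2_cases_iff)
next
  case (Suc m)
  have im: "i mod 2^Suc m < 2^Suc m" "j mod 2^Suc m < 2^Suc m" by auto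
  have e1: "((2::nat)*2^m \<le> i) = (2^m \<le> i div 2)" for i :: nat
    by (metis div_le_mono div_mult_self1_is_m le_div_geq mult.commute power_Suc zero_less_numeral nat_less_le less_mult_imp_div_less not_le)
  have e2: "(i mod ((2::nat)*2^m)) div 2 = (i div 2) mod 2^m" for i :: nat
    by (simp add: mod_mult2_eq power_Suc)  
  have o: "odd (i mod ((2::nat)*2^m)) = odd i" for i :: nat
    by (simp add: odd_iff_mod_2_eq_one mod_mod_cancel)
  show ?case
    apply (subst sylvester.simps)
    apply (subst Suc.IH[OF im])
    apply (subst sylvester.simps)
    by (simp add: e1 e2 o)
qed

lemma syl_even: "j < 2*2^m \<Longrightarrow> k < 2^m \<Longrightarrow> sylvester (Suc m) j (2*k) = sylvester m (j div 2) k"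
  by (subst syl_low) auto

lemma syl_odd: "j < 2*2^m \<Longrightarrow> k < 2^m \<Longrightarrow>
   sylvester (Suc m) j (Suc (2*k)) = (if odd j then -1 else 1) * sylvester m (j div 2) k"
  by (subst syl_low) auto

lemma syl_one: "j < 2*2^m \<Longrightarrow> sylvester (Suc m) j 1 = (if odd j then -1 else 1)"
  using syl_odd[of j m 0] by (simp add: syl_zero_right del: sylvester.simps)

lemma sum_even_odd: "(\<Sum>k<2*N. f k) = (\<Sum>k<N. f (2*k)) + (\<Sum>k<N. f (2*k+1))"
  for f :: "nat \<Rightarrow> real"
  by (induction N) (auto simp: algebra_simps)

lemma row_sum: "j < 2^m \<Longrightarrow> (\<Sum>k<2^m. sylvester m j k) = (if j = 0 then 2^m else 0)"
proof (induction m arbitrary: j)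
  case 0
  then show ?case by simp
next
  case (Suc m)
  have jd: "j div 2 < 2^m" using Suc.prems by auto
  have jl2: "j < 2*2^m" using Suc.prems by simp
  have "(\<Sum>k<2^Suc m. sylvester (Suc m) j k)
     = (\<Sum>k<2^m. sylvester (Suc m) j (2*k)) + (\<Sum>k<2^m. sylvester (Suc m) j (2*k+1))"
    using sum_even_odd[where N="2^m"] by (simp add: power_Suc)
  also have "(\<Sum>k<2^m. sylvester (Suc m) j (2*k)) = (\<Sum>k<2^m. sylvester m (j div 2) k)"
    by (rule sum.cong) (auto simp: syl_even syl_odd jl2 simp del: sylvester.simps)
  also have "(\<Sum>k<2^m. sylvester (Suc m) j (2*k+1)) = (if odd j then -1 else 1) * (\<Sum>k<2^m. sylvester m (j div 2) k)"
    by (subst sum_distrib_left, rule sum.cong) (auto simp: syl_even syl_odd jl2 simp del: sylvester.simps)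
  finally show ?case using Suc.IH[OF jd] by (auto elim!: evenE)
qed

definition symv :: "real \<Rightarrow> real \<Rightarrow> nat \<Rightarrow> real" where
  "symv g d k = (if odd k then g else d)"

lemma sum_I_to_lt:
  assumes "m \<ge> 1" "f 0 = 0"
  shows "(\<Sum>k=1..(2::nat)^m-1. f k) = (\<Sum>k<(2::nat)^m. (f k::real))"
proof -
  have "{..<(2::nat)^m} = insert 0 {1..2^m-1}" using assms(1)
    by auto
  then show ?thesis using assms by simp
qed

lemma Psi_mul_sym:
  assumes j: "j \<in> {1..2^Suc m' - 1}"
    and x: "\<forall>k\<in>{1..2^Suc m' - 1}. x k = symv g d k"
  shows "Psi_mul (Suc m') x j = (if j = 1 then 2*2^m' * g else 2^m' * (g + d))"
proof -
  have jl: "j < 2*2^m'" using j by auto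
  have "Psi_mul (Suc m') x j = (\<Sum>k=1..2^Suc m' - 1. Psi (Suc m') j k * symv g d k)"
    unfolding Psi_mul_def by (rule sum.cong) (use x in auto)
  also have "\<dots> = (\<Sum>k<2^Suc m'. Psi (Suc m') j k * symv g d k)"
    by (rule sum_I_to_lt) (auto simp: Psi_def syl_zero_right)
  also have "\<dots> = (\<Sum>k<2^m'. Psi (Suc m') j (2*k) * symv g d (2*k))
                 + (\<Sum>k<2^m'. Psi (Suc m') j (2*k+1) * symv g d (2*k+1))"
    using sum_even_odd[where N="2^m'"] by (simp add: power_Suc)
  also have "(\<Sum>k<2^m'. Psi (Suc m') j (2*k) * symv g d (2*k)) = d * (\<Sum>k<2^m'. 1 - sylvester m' (j div 2) k)"
    by (subst sum_distrib_left, rule sum.cong) (auto simp: Psi_def syl_even syl_odd jl symv_def simp del: sylvester.simps)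
  also have "(\<Sum>k<2^m'. Psi (Suc m') j (2*k+1) * symv g d (2*k+1)) = g * (\<Sum>k<2^m'. 1 - (if odd j then -1 else 1) * sylvester m' (j div 2) k)"
    by (subst sum_distrib_left, rule sum.cong) (auto simp: Psi_def syl_even syl_odd jl symv_def simp del: sylvester.simps)
  finally have e: "Psi_mul (Suc m') x j = d * (2^m' - (\<Sum>k<2^m'. sylvester m' (j div 2) k))
     + g * (2^m' - (if odd j then -1 else 1) * (\<Sum>k<2^m'. sylvester m' (j div 2) k))"
    by (simp add: sum_subtractf sum_distrib_left[symmetric])
  have jd: "j div 2 < 2^m'" using jl by auto
  have "j div 2 = 0 \<longleftrightarrow> j = 1" using j by auto
  then show ?thesis unfolding e row_sum[OF jd] by (auto simp: algebra_simps)
qed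

lemma Psi_row_sum:
  assumes i: "i \<in> {1..2^m - 1}" and hm: "m \<ge> 1"
  shows "(\<Sum>j=1..2^m - 1. Psi m i j) = 2^m"
proof -
  have il: "i < 2^m" using i by auto
  have "(\<Sum>j=1..2^m - 1. Psi m i j) = (\<Sum>j<2^m. Psi m i j)"
    by (rule sum_I_to_lt) (use hm in \<open>auto simp: Psi_def syl_zero_right\<close>)
  also have "\<dots> = 2^m - (\<Sum>j<2^m. sylvester m i j)" by (simp add: Psi_def sum_subtractf)
  finally show ?thesis using row_sum[OF il] i by simp
qed

lemma Psi_1:
  assumes "i < 2^Suc m'"
  shows "Psi (Suc m') i 1 = (if odd i then 2 else 0)"
  using assms syl_one[of i m'] by (simp add: Psi_def syl_one del: sylvester.simps)

lemma b_sym: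
  assumes i: "i \<in> {1..2^Suc m' - 1}"
    and x: "\<forall>k\<in>{1..2^Suc m' - 1}. x k = symv g d k"
  shows "b_coef (Suc m') x i = (if odd i then 2 * exp (-(2*2^m'*g)) + (2*2^m' - 2) * exp (-(2^m'*(g+d)))
                                 else 2*2^m' * exp (-(2^m'*(g+d))))"
proof -
  define E where "E = exp (-(2^m'*(g+d)))"
  define E1 where "E1 = exp (-(2*2^m'*g))"
  have il: "i < 2^Suc m'" using i by auto
  have h2: "(2::nat) \<le> 2^Suc m'" by simp
  have one: "(1::nat) \<in> {1..2^Suc m' - 1}" using h2 by (simp only: atLeastAtMost_iff) linarith
  have "b_coef (Suc m') x i = (\<Sum>j=1..2^Suc m' - 1. Psi (Suc m') i j * (E + (if j = 1 then E1 - E else 0)))"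
    unfolding b_coef_def by (rule sum.cong) (auto simp: Psi_mul_sym[OF _ x] E_def E1_def)
  also have "\<dots> = E * (\<Sum>j=1..2^Suc m' - 1. Psi (Suc m') i j) + (\<Sum>j=1..2^Suc m' - 1. Psi (Suc m') i j * (if j = 1 then E1 - E else 0))"
    by (simp add: algebra_simps sum.distrib sum_distrib_left)
  also have "(\<Sum>j=1..2^Suc m' - 1. Psi (Suc m') i j * (if j = 1 then E1 - E else 0)) = Psi (Suc m') i 1 * (E1 - E)"
  proof -
    have "(\<Sum>j=1..2^Suc m' - 1. Psi (Suc m') i j * (if j = 1 then E1 - E else 0))
        = (\<Sum>j=1..(2::nat)^Suc m' - 1. if j = 1 then Psi (Suc m') i 1 * (E1 - E) else 0)"
      by (rule sum.cong) auto
    also have "\<dots> = Psi (Suc m') i 1 * (E1 - E)"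
      by (subst sum.delta) (use one in auto)
    finally show ?thesis .
  qed
  finally show ?thesis
    using Psi_row_sum[OF i] Psi_1[OF il] by (auto simp: E_def E1_def algebra_simps)
qed

lemma Psi_bounds: "0 \<le> Psi m i j" "Psi m i j \<le> 2"
  using syl_pm[of m i j] by (auto simp: Psi_def)

lemma exp_lip:
  fixes x y :: real
  assumes "0 \<le> x" "0 \<le> y"
  shows "\<bar>exp (-x) - exp (-y)\<bar> \<le> \<bar>x - y\<bar>"
proof -
  have *: "exp (-u) - exp (-v) \<le> v - u" if "0 \<le> u" "u \<le> v" for u v :: real
  proof -
    have "exp (-u) - exp (-v) = exp (-u) * (1 - exp (u - v))"
      by (simp add: algebra_simps flip: exp_add)
    also have "\<dots> \<le> 1 * (1 - exp (u - v))"
      using that by (intro mult_right_mono) auto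
    also have "\<dots> \<le> v - u" using exp_ge_add_one_self[of "u - v"] by (simp only: mult_1)
    finally show ?thesis .
  qed
  show ?thesis
  proof (cases "x \<le> y")
    case True
    then show ?thesis using *[of x y] assms by auto
  next
    case False
    then show ?thesis using *[of y x] assms by auto
  qed
qed

lemma pow_lip:
  fixes x y M p :: real
  assumes "0 < x" "x \<le> M" "0 < y" "y \<le> M" "1 \<le> p"
  shows "\<bar>x powr p - y powr p\<bar> \<le> p * M powr (p - 1) * \<bar>x - y\<bar>"
proof -
  have *: "v powr p - u powr p \<le> p * M powr (p - 1) * (v - u)"
    if "0 < u" "u < v" "v \<le> M" for u v
  proof -
    have d: "\<And>z. u \<le> z \<Longrightarrow> z \<le> v \<Longrightarrow> ((\<lambda>z. z powr p) has_real_derivative p * z powr (p - 1)) (at z)"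
      using that by (intro has_real_derivative_powr) auto
    obtain z where z: "u < z" "z < v" "v powr p - u powr p = (v - u) * (p * z powr (p - 1))"
      using MVT2[OF \<open>u < v\<close> d] by blast
    have "z powr (p - 1) \<le> M powr (p - 1)"
      using z that assms by (intro powr_mono2) auto
    then have "p * z powr (p - 1) \<le> p * M powr (p - 1)" using assms by (intro mult_left_mono) auto
    then have "(v - u) * (p * z powr (p - 1)) \<le> (v - u) * (p * M powr (p - 1))"
      using that by (rule_tac mult_left_mono) auto
    then show ?thesis unfolding z(3) by (simp add: ac_simps)
  qed
  show ?thesis
  proof (cases x y rule: linorder_cases)
    case less
    then show ?thesis using *[of x y] assms powr_mono2[of p x y] by auto
  next
    case equal then show ?thesis by simp
  next
    case greater
    then show ?thesis using *[of y x] assms powr_mono2[of p y x] by auto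
  qed
qed

lemma Psi_mul_diff:
  "\<bar>Psi_mul m x j - Psi_mul m y j\<bar> \<le> 2 * (\<Sum>k=1..2^m-1. \<bar>x k - y k\<bar>)"
proof -
  have "\<bar>Psi_mul m x j - Psi_mul m y j\<bar> = \<bar>\<Sum>k=1..2^m-1. Psi m j k * (x k - y k)\<bar>"
    unfolding Psi_mul_def by (simp add: sum_subtractf algebra_simps)
  also have "\<dots> \<le> (\<Sum>k=1..2^m-1. \<bar>Psi m j k * (x k - y k)\<bar>)" by (rule sum_abs)
  also have "\<dots> \<le> (\<Sum>k=1..2^m-1. 2 * \<bar>x k - y k\<bar>)"
    by (intro sum_mono) (use Psi_bounds[of m j] in \<open>auto simp: abs_mult intro: mult_right_mono\<close>)
  finally show ?thesis by (simp add: sum_distrib_left)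
qed

lemma Psi_mul_nonneg:
  "(\<forall>k\<in>{1..2^m-1}. 0 \<le> x k) \<Longrightarrow> 0 \<le> Psi_mul m x j"
  unfolding Psi_mul_def by (intro sum_nonneg) (simp add: Psi_bounds)

lemma b_nonneg: "0 \<le> b_coef m x i"
  unfolding b_coef_def by (intro sum_nonneg) (simp add: Psi_bounds)

lemma D_ge1: "1 \<le> D_coef m x"
  unfolding D_coef_def by (simp add: sum_nonneg)

lemma b_bound:
  assumes "\<forall>k\<in>{1..2^m-1}. 0 \<le> x k"
  shows "b_coef m x i \<le> 2 * (2^m - 1)"
proof -
  have "b_coef m x i \<le> (\<Sum>j=1..(2::nat)^m-1. (2::real))"
    unfolding b_coef_def
  proof (intro sum_mono)
    fix j
    have "Psi m i j * exp (- Psi_mul m x j) \<le> 2 * 1"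
      by (intro mult_mono) (use Psi_bounds Psi_mul_nonneg[OF assms] in auto)
    then show "Psi m i j * exp (- Psi_mul m x j) \<le> 2" by simp
  qed
  also have "\<dots> = 2 * (2^m - 1)" by (simp add: of_nat_diff)
  finally show ?thesis .
qed

lemma b_diff:
  assumes "\<forall>k\<in>{1..2^m-1}. 0 \<le> x k" "\<forall>k\<in>{1..2^m-1}. 0 \<le> y k"
  shows "\<bar>b_coef m x i - b_coef m y i\<bar> \<le> 4 * (2^m - 1) * (\<Sum>k=1..2^m-1. \<bar>x k - y k\<bar>)"
proof -
  let ?S = "\<Sum>k=1..2^m-1. \<bar>x k - y k\<bar>"
  have "\<bar>b_coef m x i - b_coef m y i\<bar> = \<bar>\<Sum>j=1..2^m-1. Psi m i j * (exp (- Psi_mul m x j) - exp (- Psi_mul m y j))\<bar>"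
    unfolding b_coef_def by (simp add: sum_subtractf algebra_simps)
  also have "\<dots> \<le> (\<Sum>j=1..2^m-1. \<bar>Psi m i j * (exp (- Psi_mul m x j) - exp (- Psi_mul m y j))\<bar>)" by (rule sum_abs)
  also have "\<dots> \<le> (\<Sum>j=1..(2::nat)^m-1. 2 * (2 * ?S))"
  proof (intro sum_mono)
    fix j
    have "\<bar>exp (- Psi_mul m x j) - exp (- Psi_mul m y j)\<bar> \<le> \<bar>Psi_mul m x j - Psi_mul m y j\<bar>"
      by (rule exp_lip) (use Psi_mul_nonneg assms in auto)
    also have "\<dots> \<le> 2 * ?S" by (rule Psi_mul_diff)
    finally show "\<bar>Psi m i j * (exp (- Psi_mul m x j) - exp (- Psi_mul m y j))\<bar> \<le> 2 * (2 * ?S)"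
      unfolding abs_mult using Psi_bounds[of m i j]
      by (intro mult_mono) auto
  qed
  also have "\<dots> = 4 * (2^m - 1) * ?S" by (simp add: of_nat_diff)
  finally show ?thesis .
qed

lemma f_diff:
  fixes x :: "nat \<Rightarrow> real" and M p :: real
  assumes m: "m = Suc m'" and hm': "m' \<ge> 1"
    and x: "\<forall>k\<in>{1..2^m-1}. 0 < x k \<and> x k \<le> M"
    and i: "i \<in> {1..2^m-1}" and p: "1 \<le> p"
    and rep: "rep = (\<lambda>k::nat. if odd k then 1::nat else 2)"
  shows "\<bar>1 / D_coef m x * b_coef m x i * x i powr p - 1 / D_coef m x * b_coef m x (rep i) * x (rep i) powr p\<bar>
     \<le> (8 * (2^m - 1) * M powr p + 2 * (2^m - 1) * p * M powr (p - 1)) * (\<Sum>k=1..2^m-1. \<bar>x k - x (rep k)\<bar>)"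
proof -
  let ?I = "{1..(2::nat)^m-1}"
  define s where "s = (\<lambda>k. x (rep k))"
  define S where "S = (\<Sum>k=1..2^m-1. \<bar>x k - s k\<bar>)"
  define n :: real where "n = 2^m - 1"
  have "(2::nat)^2 \<le> 2^m" using m hm' by (intro power_increasing) auto
  then have "(4::nat) \<le> 2^m" by simp
  then have I12: "1 \<in> ?I" "2 \<in> ?I" by auto
  have repI: "rep k \<in> ?I" for k using I12 rep by auto
  have sI: "\<forall>k\<in>?I. s k = symv (x 1) (x 2) k" by (auto simp: s_def rep symv_def)
  have spos: "\<forall>k\<in>?I. 0 \<le> s k" using x repI by (auto simp: s_def less_imp_le)
  have xpos: "\<forall>k\<in>?I. 0 \<le> x k" using x by (auto simp: less_imp_le)
  have ri: "rep i \<in> ?I" by (rule repI)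
  have bsym: "b_coef m s i = b_coef m s (rep i)"
    using b_sym[of i m' s "x 1" "x 2"] b_sym[of "rep i" m' s "x 1" "x 2"] i ri sI m
    by (simp add: rep)
  have S0: "0 \<le> S" unfolding S_def by (simp add: sum_nonneg)
  have n0: "0 \<le> n" unfolding n_def by simp
  have d1: "\<bar>b_coef m x i - b_coef m s i\<bar> \<le> 4 * n * S"
    using b_diff[OF xpos spos] unfolding n_def S_def by simp
  have d2: "\<bar>b_coef m x (rep i) - b_coef m s i\<bar> \<le> 4 * n * S"
    using b_diff[OF xpos spos, of "rep i"] bsym unfolding n_def S_def by simp
  have bs: "\<bar>b_coef m s i\<bar> \<le> 2 * n"
    using b_bound[OF spos, of i] b_nonneg[of m s i] unfolding n_def by simp
  have Mp: "x k powr p \<le> M powr p" "0 \<le> x k powr p" if "k \<in> ?I" for k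
  proof -
    have "0 < x k" "x k \<le> M" using x that by auto
    then show "x k powr p \<le> M powr p" "0 \<le> x k powr p" using p by (auto intro: powr_mono2)
  qed
  have xi: "\<bar>x i - x (rep i)\<bar> \<le> S"
  proof -
    have "\<bar>x i - s i\<bar> \<le> S" unfolding S_def
      by (rule member_le_sum[of i ?I "\<lambda>k. \<bar>x k - s k\<bar>"]) (use i in auto)
    then show ?thesis by (simp add: s_def)
  qed
  have pw: "\<bar>x i powr p - x (rep i) powr p\<bar> \<le> p * M powr (p - 1) * S"
  proof -
    have "\<bar>x i powr p - x (rep i) powr p\<bar> \<le> p * M powr (p - 1) * \<bar>x i - x (rep i)\<bar>"
      by (rule pow_lip) (use x i ri p in auto)
    also have "\<dots> \<le> p * M powr (p - 1) * S" using xi p by (intro mult_left_mono) auto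
    finally show ?thesis .
  qed
  define Bi where "Bi = b_coef m x i"
  define Br where "Br = b_coef m x (rep i)"
  define Bs where "Bs = b_coef m s i"
  define Xi where "Xi = x i powr p"
  define Xr where "Xr = x (rep i) powr p"
  have key: "Bi * Xi - Br * Xr = (Bi - Bs) * Xi - (Br - Bs) * Xr + Bs * (Xi - Xr)"
    by (simp add: algebra_simps)
  have t: "\<bar>A - B + C\<bar> \<le> \<bar>A\<bar> + \<bar>B\<bar> + \<bar>C\<bar>" for A B C :: real by arith
  have X0: "0 \<le> Xi" "0 \<le> Xr" "Xi \<le> M powr p" "Xr \<le> M powr p"
    using Mp[OF i] Mp[OF ri] unfolding Xi_def Xr_def by auto
  have "\<bar>Bi * Xi - Br * Xr\<bar> \<le> \<bar>Bi - Bs\<bar> * Xi + \<bar>Br - Bs\<bar> * Xr + \<bar>Bs\<bar> * \<bar>Xi - Xr\<bar>"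
    unfolding key using t[of "(Bi - Bs) * Xi" "(Br - Bs) * Xr" "Bs * (Xi - Xr)"] X0
    by (simp add: abs_mult)
  also have "\<dots> \<le> (4 * n * S) * M powr p + (4 * n * S) * M powr p + (2 * n) * (p * M powr (p - 1) * S)"
  proof (intro add_mono)
    show "\<bar>Bi - Bs\<bar> * Xi \<le> 4 * n * S * M powr p"
      by (rule mult_mono) (use d1 X0 n0 S0 in \<open>auto simp: Bi_def Bs_def\<close>)
    show "\<bar>Br - Bs\<bar> * Xr \<le> 4 * n * S * M powr p"
      by (rule mult_mono) (use d2 X0 n0 S0 in \<open>auto simp: Br_def Bs_def\<close>)
    show "\<bar>Bs\<bar> * \<bar>Xi - Xr\<bar> \<le> 2 * n * (p * M powr (p - 1) * S)"
      by (rule mult_mono) (use bs pw n0 in \<open>auto simp: Bs_def Xi_def Xr_def\<close>)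
  qed
  also have "\<dots> = (8 * n * M powr p + 2 * n * p * M powr (p - 1)) * S"
    by (simp add: algebra_simps)
  finally have main: "\<bar>Bi * Xi - Br * Xr\<bar> \<le> (8 * n * M powr p + 2 * n * p * M powr (p - 1)) * S" .
  have D1: "1 \<le> D_coef m x" by (rule D_ge1)
  have "\<bar>1 / D_coef m x * Bi * Xi - 1 / D_coef m x * Br * Xr\<bar> = \<bar>Bi * Xi - Br * Xr\<bar> / D_coef m x"
    using D1 by (simp add: field_simps abs_div)
  also have "\<dots> \<le> \<bar>Bi * Xi - Br * Xr\<bar>" using D1
    by (simp add: divide_le_eq) (metis abs_ge_zero mult_left_mono mult.right_neutral)
  finally show ?thesis using main unfolding Bi_def Br_def Xi_def Xr_def S_def n_def s_def
    by simp
qed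

lemma ratio_ineq:
  fixes g d K L E E1 Dd :: real
  assumes g: "g > 0" and d: "d > 0" and K: "K \<ge> 4" and L: "L \<ge> 2" and E: "E > 0" and E1: "E1 > 0" and Dd: "Dd > 0"
    and r: "g / d > (K / (K - 2)) powr ((L + 1) / (L - 1))"
  shows "(1 / Dd * (2 * E1 + (K - 2) * E) * g powr (2 * L / (L + 1))) * d
         - g * (1 / Dd * (K * E) * d powr (2 * L / (L + 1))) > 0"
proof -
  define q where "q = (L - 1) / (L + 1)"
  have q0: "q > 0" using L by (simp add: q_def)
  have pq: "2 * L / (L + 1) = 1 + q" using L by (simp add: q_def field_simps)
  have gp: "g powr (2 * L / (L + 1)) = g * g powr q" using g by (simp add: pq powr_add)
  have dp: "d powr (2 * L / (L + 1)) = d * d powr q" using d by (simp add: pq powr_add)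
  have c0: "0 \<le> (K / (K - 2)) powr ((L + 1) / (L - 1))" by simp
  have "((K / (K - 2)) powr ((L + 1) / (L - 1))) powr q < (g / d) powr q"
    by (rule powr_less_mono2) (use q0 c0 r in auto)
  moreover have "((K / (K - 2)) powr ((L + 1) / (L - 1))) powr q = K / (K - 2)"
    using L K by (simp add: powr_powr q_def)
  ultimately have "K / (K - 2) < g powr q / d powr q" using g d by (simp add: powr_divide)
  then have h: "K * d powr q < (K - 2) * g powr q" using K d
    by (simp add: field_simps)
  have gq: "g powr q > 0" using g by simp
  have "(K - 2) * E * g powr q < (2 * E1 + (K - 2) * E) * g powr q"
    using gq E1 by (intro mult_strict_right_mono) auto
  moreover have "K * E * d powr q < (K - 2) * E * g powr q" using h E
    by (metis mult.commute mult.left_commute mult_strict_left_mono)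
  ultimately have main: "0 < (2 * E1 + (K - 2) * E) * g powr q - K * E * d powr q" by linarith
  have "(1 / Dd * (2 * E1 + (K - 2) * E) * g powr (2 * L / (L + 1))) * d
         - g * (1 / Dd * (K * E) * d powr (2 * L / (L + 1)))
       = (g * d / Dd) * ((2 * E1 + (K - 2) * E) * g powr q - K * E * d powr q)"
    unfolding gp dp using Dd by (simp add: field_simps)
  also have "\<dots> > 0" using g d Dd main by simp
  finally show ?thesis .
qed

theorem mainTheorem13:
  fixes m L :: nat and a :: "real \<Rightarrow> nat \<Rightarrow> real" and \<gamma>0 \<delta>0 :: real
  assumes hm: "m \<ge> 2" and hL: "L \<ge> 2"
    and ode: "\<And>t i. t \<ge> 0 \<Longrightarrow> i \<in> {1..2^m - 1} \<Longrightarrow>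
      ((\<lambda>s. a s i) has_real_derivative
         (1 / D_coef m (a t)) * b_coef m (a t) i * (a t i) powr (2 * real L / (real L + 1)))
       (at t within {0..})"
    and init: "\<And>i. i \<in> {1..2^m - 1} \<Longrightarrow> a 0 i = (if odd i then \<gamma>0 else \<delta>0)"
    and pos: "\<gamma>0 > 0" "\<delta>0 > 0"
    and ratio: "\<gamma>0 / \<delta>0 > (real (2^m) / (real (2^m) - 2)) powr ((real L + 1) / (real L - 1))"
  shows "\<exists>\<gamma> \<delta> :: real \<Rightarrow> real.
     (\<forall>t\<ge>0. \<forall>i\<in>{1..2^m - 1}. a t i = (if odd i then \<gamma> t else \<delta> t))
   \<and> strict_mono_on {0..} (\<lambda>t. \<gamma> t / \<delta> t)
   \<and> (\<forall>t\<ge>0. \<gamma> t / \<delta> t > (real (2^m) / (real (2^m) - 2)) powr ((real L + 1) / (real L - 1)))"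
proof -
  obtain m' where m: "m = Suc m'" and hm': "m' \<ge> 1" using hm by (cases m) auto
  define I where "I = {1..(2::nat)^m - 1}"
  define p where "p = 2 * real L / (real L + 1)"
  define F where "F t i = 1 / D_coef m (a t) * b_coef m (a t) i * (a t i) powr p" for t i
  define rep where "rep = (\<lambda>k::nat. if odd k then 1::nat else 2)"
  have p1: "1 \<le> p" using hL by (simp add: p_def field_simps)
  have "(2::nat)^2 \<le> 2^m" using hm by (intro power_increasing) auto
  then have four: "(4::nat) \<le> 2^m" by simp
  then have I12: "1 \<in> I" "2 \<in> I" by (auto simp: I_def)
  have repI: "rep k \<in> I" for k using I12 by (auto simp: rep_def)
  have finI: "finite I" by (simp add: I_def)
  have ode': "((\<lambda>s. a s i) has_real_derivative F t i) (at t within {0..})" if "t \<ge> 0" "i \<in> I" for t i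
    using ode[OF that[unfolded I_def]] unfolding F_def p_def .
  have dat: "((\<lambda>s. a s i) has_real_derivative F t i) (at t)" if "t > 0" "i \<in> I" for t i
  proof -
    have "((\<lambda>s. a s i) has_real_derivative F t i) (at t within {0<..})"
      by (rule DERIV_subset[OF ode']) (use that in auto)
    then show ?thesis using that by (simp add: at_within_open[of t "{0<..}"])
  qed
  have cont: "continuous_on {0..} (\<lambda>s. a s i)" if "i \<in> I" for i
    by (rule DERIV_continuous_on[of _ _ "\<lambda>t. F t i"]) (use ode' that in auto)
  have Fnn: "0 \<le> F t i" for t i
    unfolding F_def using D_ge1[of m "a t"] b_nonneg[of m "a t" i]
    by (intro mult_nonneg_nonneg) auto
  have amono: "a s i \<le> a t i" if "i \<in> I" "0 \<le> s" "s \<le> t" for i s t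
  proof (rule DERIV_nonneg_imp_increasing_open[of s t "\<lambda>s. a s i"])
    show "s \<le> t" by fact
    show "\<exists>y. ((\<lambda>s. a s i) has_real_derivative y) (at x) \<and> 0 \<le> y" if "s < x" "x < t" for x
      using dat[of x i] Fnn \<open>i \<in> I\<close> \<open>0 \<le> s\<close> that by auto
    show "continuous_on {s..t} (\<lambda>s. a s i)"
      by (rule continuous_on_subset[OF cont[OF \<open>i \<in> I\<close>]]) (use that in auto)
  qed
  have a0: "0 < a 0 i" if "i \<in> I" for i using init[of i] that pos by (auto simp: I_def)
  have apos: "0 < a t i" if "0 \<le> t" "i \<in> I" for t i
    using a0[OF that(2)] amono[OF that(2) order_refl that(1)] by linarith
  have sym: "a T i = a T (rep i)" if T: "0 \<le> T" and i: "i \<in> I" for T i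
  proof -
    define M where "M = (\<Sum>k\<in>I. a T k)"
    have xM: "0 < a t k \<and> a t k \<le> M" if "0 \<le> t" "t \<le> T" "k \<in> I" for t k
    proof -
      have "a t k \<le> a T k" using amono that by blast
      also have "a T k \<le> M" unfolding M_def
        by (rule member_le_sum) (use that finI apos T in \<open>auto intro: less_imp_le\<close>)
      finally show ?thesis using apos that by auto
    qed
    define C where "C = 8 * (2^m - 1) * M powr p + 2 * (2^m - 1) * p * M powr (p - 1)"
    define n where "n = real (card I)"
    define u where "u t = (\<Sum>i\<in>I. (a t i - a t (rep i))^2)" for t
    define lam where "lam = 2 * C * n"
    define u' where "u' t = (\<Sum>i\<in>I. 2 * (a t i - a t (rep i)) * (F t i - F t (rep i)))" for t
    define w where "w t = u t * exp (-(lam * t))" for t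
    have "(1::real) \<le> 2^m" by simp
    then have C0: "0 \<le> C" unfolding C_def using p1 by (intro add_nonneg_nonneg mult_nonneg_nonneg) auto
    have n0: "0 \<le> n" by (simp add: n_def)
    have fd: "\<bar>F t i - F t (rep i)\<bar> \<le> C * (\<Sum>k\<in>I. \<bar>a t k - a t (rep k)\<bar>)"
      if "0 \<le> t" "t \<le> T" "i \<in> I" for t i
      unfolding F_def C_def I_def
      by (rule f_diff[OF m hm' _ _ p1 rep_def]) (use xM that in \<open>auto simp: I_def\<close>)
    have ud: "(u has_real_derivative u' t) (at t)" if "0 < t" for t
      unfolding u_def u'_def
    proof (rule DERIV_sum)
      fix i assume "i \<in> I"
      have d1: "((\<lambda>s. a s i) has_real_derivative F t i) (at t)" using dat that \<open>i \<in> I\<close> by auto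
      have d2: "((\<lambda>s. a s (rep i)) has_real_derivative F t (rep i)) (at t)" using dat that repI by auto
      note DERIV_power[OF DERIV_diff[OF d1 d2], of 2]
      then show "((\<lambda>s. (a s i - a s (rep i))^2) has_real_derivative
               2 * (a t i - a t (rep i)) * (F t i - F t (rep i))) (at t)"
        by (simp add: algebra_simps)
    qed
    have ub: "u' t \<le> lam * u t" if "0 \<le> t" "t \<le> T" for t
    proof -
      define S where "S = (\<Sum>k\<in>I. \<bar>a t k - a t (rep k)\<bar>)"
      have "u' t \<le> (\<Sum>i\<in>I. 2 * \<bar>a t i - a t (rep i)\<bar> * (C * S))"
        unfolding u'_def
      proof (rule sum_mono)
        fix i assume "i \<in> I"
        have "2 * (a t i - a t (rep i)) * (F t i - F t (rep i))
              \<le> \<bar>2 * (a t i - a t (rep i)) * (F t i - F t (rep i))\<bar>" by simp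
        also have "\<dots> = 2 * \<bar>a t i - a t (rep i)\<bar> * \<bar>F t i - F t (rep i)\<bar>" by (simp only: abs_mult)
        also have "\<dots> \<le> 2 * \<bar>a t i - a t (rep i)\<bar> * (C * S)"
          using fd[OF that \<open>i \<in> I\<close>] unfolding S_def by (intro mult_left_mono) auto
        finally show "2 * (a t i - a t (rep i)) * (F t i - F t (rep i)) \<le> 2 * \<bar>a t i - a t (rep i)\<bar> * (C * S)" .
      qed
      also have "\<dots> = 2 * C * S^2" by (simp add: S_def power2_eq_square sum_distrib_left sum_distrib_right algebra_simps)
      also have "\<dots> \<le> 2 * C * (u t * n)"
      proof -
        have "S^2 \<le> (\<Sum>k\<in>I. \<bar>a t k - a t (rep k)\<bar>^2) * card I"
          unfolding S_def by (rule sum_squared_le_sum_of_squares)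
        then have "S^2 \<le> u t * n" by (simp add: u_def n_def)
        then show ?thesis using C0 by (intro mult_left_mono) auto
      qed
      also have "\<dots> = lam * u t" by (simp add: lam_def)
      finally show ?thesis .
    qed
    have u0: "u 0 = 0" unfolding u_def
      by (intro sum.neutral ballI) (use init repI in \<open>auto simp: rep_def I_def\<close>)
    have ucont: "continuous_on {0..T} u" unfolding u_def
      by (intro continuous_intros continuous_on_subset[OF cont]) (use repI in auto)
    have "w T \<le> w 0"
    proof (rule DERIV_nonpos_imp_decreasing_open[of 0 T w])
      show "0 \<le> T" by fact
      show "continuous_on {0..T} w" unfolding w_def by (intro continuous_intros ucont)
      show "\<exists>y. (w has_real_derivative y) (at x) \<and> y \<le> 0" if "0 < x" "x < T" for x
      proof (intro exI conjI)
        have e: "((\<lambda>t. exp (-(lam * t))) has_real_derivative exp (-(lam * x)) * (- lam)) (at x)"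
          by (auto intro!: derivative_eq_intros)
        show "(w has_real_derivative (u' x * exp (-(lam * x)) + exp (-(lam * x)) * (- lam) * u x)) (at x)"
          unfolding w_def by (rule DERIV_mult[OF ud[OF \<open>0 < x\<close>] e])
        have "u' x \<le> lam * u x" using ub that by auto
        then have "(u' x - lam * u x) * exp (-(lam * x)) \<le> 0"
          by (intro mult_nonpos_nonneg) auto
        then show "u' x * exp (-(lam * x)) + exp (-(lam * x)) * (- lam) * u x \<le> 0"
          by (simp add: algebra_simps)
      qed
    qed
    then have "u T \<le> 0" using u0 by (simp add: w_def zero_le_mult_iff)
      (metis exp_gt_zero mult_le_0_iff not_le)
    moreover have "0 \<le> u T" unfolding u_def by (simp add: sum_nonneg)
    ultimately have "u T = 0" by simp
    then have "(a T i - a T (rep i))^2 = 0"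
      using sum_nonneg_eq_0_iff[OF finI, of "\<lambda>i. (a T i - a T (rep i))^2"] i unfolding u_def by auto
    then show ?thesis by simp
  qed
  define \<gamma> where "\<gamma> t = a t 1" for t
  define \<delta> where "\<delta> t = a t 2" for t
  define r where "r t = \<gamma> t / \<delta> t" for t
  define c where "c = (real (2^m) / (real (2^m) - 2)) powr ((real L + 1) / (real L - 1))"
  define K :: real where "K = 2 * 2^m'"
  have Km: "real (2^m) = K" by (simp add: K_def m)
  have Km2: "(2::real)^m = K" by (simp add: K_def m)
  have "(2::real)^1 \<le> 2^m'" by (intro power_increasing) (use hm' in auto)
  then have K4: "K \<ge> 4" by (simp add: K_def)
  have gpos: "0 < \<gamma> t" "0 < \<delta> t" if "0 \<le> t" for t using apos[OF that] I12 by (auto simp: \<gamma>_def \<delta>_def)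
  have asym: "\<forall>k\<in>{1..2^Suc m' - 1}. a t k = symv (\<gamma> t) (\<delta> t) k" if "0 \<le> t" for t
  proof
    fix k :: nat assume "k \<in> {1..2^Suc m' - 1}"
    then have kI: "k \<in> I" by (simp add: I_def m)
    show "a t k = symv (\<gamma> t) (\<delta> t) k"
      using sym[OF that kI] by (simp add: rep_def symv_def \<gamma>_def \<delta>_def split: if_splits)
  qed
  have one_m: "(1::nat) \<in> {1..2^Suc m' - 1}" "(2::nat) \<in> {1..2^Suc m' - 1}" using I12 by (auto simp: I_def m)
  have b1: "b_coef m (a t) 1 = 2 * exp (-(2*2^m'*\<gamma> t)) + (K - 2) * exp (-(2^m'*(\<gamma> t + \<delta> t)))"
    if "0 \<le> t" for t
    using b_sym[OF one_m(1) asym[OF that]] by (simp add: m K_def)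
  have b2: "b_coef m (a t) 2 = K * exp (-(2^m'*(\<gamma> t + \<delta> t)))"
    if "0 \<le> t" for t
    using b_sym[OF one_m(2) asym[OF that]] by (simp add: m K_def)
  have rderiv: "\<exists>y. (r has_real_derivative y) (at t) \<and> y > 0" if "0 < t" "c < r t" for t
  proof (intro exI conjI)
    have t0: "0 \<le> t" using that by simp
    have dd: "((\<lambda>s. a s 1 / a s 2) has_real_derivative (F t 1 * a t 2 - a t 1 * F t 2) / (a t 2 * a t 2)) (at t)"
      by (rule DERIV_divide[OF dat[OF that(1) I12(1)] dat[OF that(1) I12(2)]])
         (use gpos[OF t0] in \<open>simp add: \<delta>_def\<close>)
    show "(r has_real_derivative (F t 1 * \<delta> t - \<gamma> t * F t 2) / (\<delta> t)^2) (at t)"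
      using dd unfolding r_def[abs_def] \<gamma>_def \<delta>_def by (simp add: power2_eq_square)
    have "(1 / D_coef m (a t) * (2 * exp (-(2*2^m'*\<gamma> t)) + (K - 2) * exp (-(2^m'*(\<gamma> t + \<delta> t)))) * \<gamma> t powr (2 * real L / (real L + 1))) * \<delta> t
         - \<gamma> t * (1 / D_coef m (a t) * (K * exp (-(2^m'*(\<gamma> t + \<delta> t)))) * \<delta> t powr (2 * real L / (real L + 1))) > 0"
      by (rule ratio_ineq) (use gpos[OF t0] K4 hL D_ge1[of m "a t"] that(2) in \<open>auto simp: r_def c_def Km2\<close>)
    then have "F t 1 * \<delta> t - \<gamma> t * F t 2 > 0"
      unfolding F_def b1[OF t0] b2[OF t0] p_def by (simp add: \<gamma>_def \<delta>_def)
    then show "(F t 1 * \<delta> t - \<gamma> t * F t 2) / (\<delta> t)^2 > 0" using gpos[OF t0] by simp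
  qed
  have rcont: "continuous_on {0..} r"
    unfolding r_def[abs_def] \<gamma>_def \<delta>_def
    by (intro continuous_on_divide cont I12) (use apos[OF _ I12(2)] in fastforce)
  have r0: "c < r 0" using init[of 1] init[of 2] I12 ratio by (simp add: r_def \<gamma>_def \<delta>_def I_def c_def)
  have above: "c < r t" if "0 \<le> t" for t
  proof (rule ccontr)
    assume "\<not> c < r t"
    then have rt: "r t \<le> c" by simp
    define S where "S = {0..t} \<inter> r -` {..c}"
    have cS: "closed S" unfolding S_def
      by (rule continuous_closed_preimage) (auto intro: continuous_on_subset[OF rcont])
    have tS: "t \<in> S" using rt that by (simp add: S_def)
    have bS: "bdd_below S" unfolding S_def by (rule bdd_belowI[of _ 0]) auto
    define t1 where "t1 = Inf S"
    have t1S: "t1 \<in> S" unfolding t1_def by (rule closed_contains_Inf) (use tS bS cS in auto)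
    have t10: "0 \<le> t1" "r t1 \<le> c" using t1S by (auto simp: S_def)
    have lt: "c < r x" if "0 \<le> x" "x < t1" for x
    proof (rule ccontr)
      assume "\<not> c < r x"
      then have "x \<in> S" using that t1S by (auto simp: S_def)
      then have "t1 \<le> x" unfolding t1_def by (rule cInf_lower[OF _ bS])
      then show False using that by simp
    qed
    have "t1 \<noteq> 0" using r0 t10 by auto
    then have "0 < t1" using t10 by simp
    have "r 0 < r t1"
    proof (rule DERIV_pos_imp_increasing_open[OF \<open>0 < t1\<close>])
      show "\<exists>y. (r has_real_derivative y) (at x) \<and> 0 < y" if "0 < x" "x < t1" for x
        using rderiv[OF that(1) lt] that by auto
      show "continuous_on {0..t1} r" by (rule continuous_on_subset[OF rcont]) auto
    qed
    then show False using r0 t10 by simp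
  qed
  have smono: "strict_mono_on {0..} r"
  proof (rule strict_mono_onI)
    fix s t :: real assume st: "s \<in> {0..}" "t \<in> {0..}" "s < t"
    show "r s < r t"
    proof (rule DERIV_pos_imp_increasing_open[OF \<open>s < t\<close>])
      show "\<exists>y. (r has_real_derivative y) (at x) \<and> 0 < y" if "s < x" "x < t" for x
        using rderiv[of x] above[of x] that st by auto
      show "continuous_on {s..t} r" by (rule continuous_on_subset[OF rcont]) (use st in auto)
    qed
  qed
  show ?thesis
  proof (intro exI conjI allI impI ballI)
    show "a t i = (if odd i then \<gamma> t else \<delta> t)" if "0 \<le> t" "i \<in> {1..2^m - 1}" for t i
      using sym[OF that(1), of i] that(2) by (auto simp: I_def rep_def \<gamma>_def \<delta>_def)
    show "strict_mono_on {0..} (\<lambda>t. \<gamma> t / \<delta> t)" using smono by (simp add: r_def[abs_def])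
    show "(real (2^m) / (real (2^m) - 2)) powr ((real L + 1) / (real L - 1)) < \<gamma> t / \<delta> t" if "0 \<le> t" for t
      using above[OF that] by (simp add: r_def c_def)
  qed
qed

end
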